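(* Let $P$ be a finite poset with a partition $P=P^*\sqcup C\sqcup O$ into marked, chain and order elements, where $\min(P)\subseteq P^*$. Let $\mathcal{I}=(I_0,\dots,I_{k-1})\in\mathfrak{I}(P^* )$ and $\lambda,\mu\in\mathcal{L}(P^*,\mathcal{I})$. Then \[\mathcal{O}_{C,O}(P,\lambda+\mu)=\mathcal{O}_{C,O}(P,\lambda)+\mathcal{O}_{C,O}(P,\mu).\] Furthermore, if $\lambda$ and $\mu$ are both integral, then \[\mathcal{O}^{\mathbb{Z}}_{C,O}(P,\lambda+\mu)=\mathcal{O}^{\mathbb{Z}}_{C,O}(P,\lambda)+\mathcal{O}^{\mathbb{Z}}_{C,O}(P,\mu).\]
   Context: $p\prec q$ denotes a covering relation in $P$. For an order-preserving $\lambda\colon P^*\to\mathbb{R}$, the marked chain-order polyhedron $\mathcal{O}_{C,O}(P,\lambda)\subseteq\mathbb{R}^P$ is the set of all $\mathbf{x}=(x_p)_{p\in P}$ with: (1) $x_a=\lambda(a)$ for $a\in P^*$; (2) $x_p\ge 0$ for $p\in C$; (3) $x_{p_1}+\cdots+x_{p_r}\le x_b-x_a$ for every saturated chain $a\prec p_1\prec\cdots\prec p_r\prec b$ in $P$ with $a,b\in P^*\sqcup O$, all $p_i\in C$, $r\ge0$. $\mathcal{O}^{\mathbb{Z}}_{C,O}(P,\lambda)=\mathcal{O}_{C,O}(P,\lambda)\cap\mathbb{Z}^P$; Minkowski sums are denoted by $+$. $\mathfrak{I}(P^* )$ is the set of chains $\varnothing\ne I_0\subsetneq I_1\subsetneq\cdots\subsetneq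 I_{k-1}\ne P^*$ of order ideals of the poset $P^*$ (with $k\ge 1$; the empty chain with $k=1$... i.e. any such chain, possibly of length zero); set $I_{-1}=\varnothing$, $I_k=P^*$. For $\mathcal{I}\in\mathfrak{I}(P^* )$, $\mathcal{L}(P^*,\mathcal{I})$ is the set of order-preserving maps $f\colon P^*\to\mathbb{R}$ that are constant on each $I_j\setminus I_{j-1}$ ($j=0,\dots,k$) and satisfy $f(I_0\setminus I_{-1})\le f(I_1\setminus I_0)\le\cdots\le f(I_k\setminus I_{k-1})$. A marking is integral if it takes values in $\mathbb{Z}$. *)

theory Defs
  imports Main Complex_Main
begin

text \<open>The finite poset P is a finite subset of an ordered type, with the induced order.
Points of R^P are functions 'a => real vanishing outside P.\<close>

definition covers :: "'a::order set \<Rightarrow> 'a \<Rightarrow> 'a \<Rightarrow> bool" where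
  "covers P p q \<longleftrightarrow> p \<in> P \<and> q \<in> P \<and> p < q \<and> \<not> (\<exists>r\<in>P. p < r \<and> r < q)"

definition minimal_elements :: "'a::order set \<Rightarrow> 'a set" where
  "minimal_elements P = {p \<in> P. \<not> (\<exists>q\<in>P. q < p)}"

definition order_preserving_on :: "'a::order set \<Rightarrow> ('a \<Rightarrow> real) \<Rightarrow> bool" where
  "order_preserving_on A f \<longleftrightarrow> (\<forall>a\<in>A. \<forall>b\<in>A. a \<le> b \<longrightarrow> f a \<le> f b)"

definition mco_polyhedron ::
  "'a::order set \<Rightarrow> 'a set \<Rightarrow> 'a set \<Rightarrow> 'a set \<Rightarrow> ('a \<Rightarrow> real) \<Rightarrow> ('a \<Rightarrow> real) set" where
  "mco_polyhedron P Pstar C Ord lam =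
     {x. (\<forall>p. p \<notin> P \<longrightarrow> x p = 0)
       \<and> (\<forall>a\<in>Pstar. x a = lam a)
       \<and> (\<forall>p\<in>C. x p \<ge> 0)
       \<and> (\<forall>a b ps. a \<in> Pstar \<union> Ord \<longrightarrow> b \<in> Pstar \<union> Ord \<longrightarrow> set ps \<subseteq> C \<longrightarrow>
             successively (covers P) (a # ps @ [b]) \<longrightarrow>
             sum_list (map x ps) \<le> x b - x a)}"

definition mco_lattice_points ::
  "'a::order set \<Rightarrow> 'a set \<Rightarrow> 'a set \<Rightarrow> 'a set \<Rightarrow> ('a \<Rightarrow> real) \<Rightarrow> ('a \<Rightarrow> real) set" where
  "mco_lattice_points P Pstar C Ord lam =
     {x \<in> mco_polyhedron P Pstar C Ord lam. \<forall>p\<in>P. x p \<in> \<int>}"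

definition minkowski_sum :: "('a \<Rightarrow> real) set \<Rightarrow> ('a \<Rightarrow> real) set \<Rightarrow> ('a \<Rightarrow> real) set" where
  "minkowski_sum A B = {(\<lambda>p. x p + y p) | x y. x \<in> A \<and> y \<in> B}"

definition order_ideal :: "'a::order set \<Rightarrow> 'a set \<Rightarrow> bool" where
  "order_ideal Q I \<longleftrightarrow> I \<subseteq> Q \<and> (\<forall>p\<in>I. \<forall>q\<in>Q. q \<le> p \<longrightarrow> q \<in> I)"

definition ideal_chains :: "'a::order set \<Rightarrow> 'a set list set" where
  "ideal_chains Q = {Is. (\<forall>I\<in>set Is. order_ideal Q I)
       \<and> (Is \<noteq> [] \<longrightarrow> hd Is \<noteq> {} \<and> last Is \<noteq> Q)
       \<and> successively (\<subset>) Is}"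

text \<open>Blocks I_j - I_{j-1} for j = 0..k, with I_{-1} = {} and I_k = Pstar.\<close>
definition ideal_blocks :: "'a set \<Rightarrow> 'a set list \<Rightarrow> 'a set list" where
  "ideal_blocks Q Is = (let Js = Is @ [Q] in
      map (\<lambda>j. Js ! j - (if j = 0 then {} else Js ! (j - 1))) [0..<length Js])"

definition markings_L :: "'a::order set \<Rightarrow> 'a set list \<Rightarrow> ('a \<Rightarrow> real) set" where
  "markings_L Q Is = {f. order_preserving_on Q f
       \<and> (\<forall>B\<in>set (ideal_blocks Q Is). \<forall>a\<in>B. \<forall>b\<in>B. f a = f b)
       \<and> (\<forall>j. Suc j < length (ideal_blocks Q Is) \<longrightarrow>
            (\<forall>a\<in>ideal_blocks Q Is ! j. \<forall>b\<in>ideal_blocks Q Is ! Suc j. f a \<le> f b))}"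

end

theory Submission
  imports Defs
begin

definition chainvals :: "'a::order set \<Rightarrow> 'a set \<Rightarrow> 'a set \<Rightarrow> ('a \<Rightarrow> real) \<Rightarrow> 'a \<Rightarrow> real set" where
  "chainvals P A C z p = {z a + sum_list (map z ps) | a ps. a \<in> A \<and> set ps \<subseteq> C \<and> ps \<noteq> []
      \<and> last ps = p \<and> successively (covers P) (a # ps)}"

definition wt :: "'a::order set \<Rightarrow> 'a set \<Rightarrow> 'a set \<Rightarrow> ('a \<Rightarrow> real) \<Rightarrow> 'a \<Rightarrow> real" where
  "wt P A C z p = (if chainvals P A C z p = {} then 0 else Max (chainvals P A C z p))"

definition decomp :: "'a::order set \<Rightarrow> 'a set \<Rightarrow> 'a set \<Rightarrow> ('a \<Rightarrow> real) \<Rightarrow> (real \<Rightarrow> real) \<Rightarrow> 'a \<Rightarrow> real" where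
  "decomp P A C z g = (\<lambda>p. if p \<in> A then g (z p) else if p \<in> C then g (wt P A C z p) - g (wt P A C z p - z p) else 0)"

lemma sorted_less_distinct: "sorted_wrt (<) (xs :: 'a::order list) \<Longrightarrow> distinct xs"
  by (induction xs) auto

lemma succ_covers_less: "successively (covers P) xs \<Longrightarrow> successively (<) xs"
  by (rule successively_mono, assumption) (auto simp: covers_def)

lemma succ_covers_distinct: "successively (covers P) (xs :: 'a::order list) \<Longrightarrow> distinct xs"
  using succ_covers_less[of P xs] successively_conv_sorted_wrt[of "(<) :: 'a \<Rightarrow> 'a \<Rightarrow> bool"]
  by (metis sorted_less_distinct transp_on_less)

lemma finite_chainvals:
  assumes "finite P" "A \<subseteq> P" "C \<subseteq> P"
  shows "finite (chainvals P A C z p)"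
proof -
  have "chainvals P A C z p \<subseteq> (\<lambda>(a,ps). z a + sum_list (map z ps)) ` (P \<times> {ps. set ps \<subseteq> P \<and> length ps \<le> card P})"
  proof
    fix v assume "v \<in> chainvals P A C z p"
    then obtain a ps where v: "v = z a + sum_list (map z ps)" "a \<in> A" "set ps \<subseteq> C"
      "successively (covers P) (a # ps)" unfolding chainvals_def by blast
    have "distinct ps" using succ_covers_distinct[OF v(4)] by simp
    hence "length ps = card (set ps)" by (simp add: distinct_card)
    also have "\<dots> \<le> card P" using v(3) assms by (intro card_mono) auto
    finally show "v \<in> (\<lambda>(a,ps). z a + sum_list (map z ps)) ` (P \<times> {ps. set ps \<subseteq> P \<and> length ps \<le> card P})"
      using v assms by (auto intro!: image_eqI[of _ _ "(a,ps)"])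
  qed
  moreover have "finite (P \<times> {ps. set ps \<subseteq> P \<and> length ps \<le> card P})"
    using assms(1) finite_lists_length_le by blast
  ultimately show ?thesis by (meson finite_imageI finite_subset)
qed

context
  fixes P A C :: "'a::order set" and z :: "'a \<Rightarrow> real"
  assumes fin: "finite P" and AP: "A \<subseteq> P" and CP: "C \<subseteq> P" and AC: "A \<inter> C = {}"
    and zch: "\<forall>a b ps. a \<in> A \<longrightarrow> b \<in> A \<longrightarrow> set ps \<subseteq> C \<longrightarrow> successively (covers P) (a # ps @ [b])
               \<longrightarrow> sum_list (map z ps) \<le> z b - z a"
begin

lemma wt_ge: "v \<in> chainvals P A C z p \<Longrightarrow> v \<le> wt P A C z p"
  unfolding wt_def using finite_chainvals[OF fin AP CP] by auto

lemma wt_in: "chainvals P A C z p \<noteq> {} \<Longrightarrow> wt P A C z p \<in> chainvals P A C z p"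
  unfolding wt_def using finite_chainvals[OF fin AP CP] by auto

lemma chain_main:
  assumes "mono g" "a \<in> A" "set ps \<subseteq> C" "ps \<noteq> []" "successively (covers P) (a # ps)"
  shows "chainvals P A C z (last ps) \<noteq> {} \<and>
         sum_list (map (decomp P A C z g) ps) \<le> g (wt P A C z (last ps)) - g (z a)"
  using assms(3-5)
proof (induction ps rule: rev_induct)
  case Nil then show ?case by simp
next
  case (snoc p qs)
  have pC: "p \<in> C" "p \<notin> A" using snoc.prems AC by auto
  have dp: "decomp P A C z g p = g (wt P A C z p) - g (wt P A C z p - z p)"
    using pC unfolding decomp_def by simp
  show ?case
  proof (cases "qs = []")
    case True
    have "z a + z p \<in> chainvals P A C z p"
      unfolding chainvals_def using snoc.prems True assms(2) by (auto intro!: exI[of _ a] exI[of _ "[p]"])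
    hence ne: "chainvals P A C z p \<noteq> {}" and le: "z a \<le> wt P A C z p - z p"
      using wt_ge by force+
    have "g (z a) \<le> g (wt P A C z p - z p)" using le assms(1) by (simp add: monoD)
    then show ?thesis using True dp ne by simp
  next
    case False
    have sq: "successively (covers P) (a # qs)" and cqp: "covers P (last qs) p"
      using snoc.prems(3) False successively_append_iff[of "covers P" "a # qs" "[p]"] by (auto simp: last_ConsR)
    have IH: "chainvals P A C z (last qs) \<noteq> {} \<and>
         sum_list (map (decomp P A C z g) qs) \<le> g (wt P A C z (last qs)) - g (z a)"
      using snoc.IH snoc.prems False sq by auto
    then obtain a' ps' where ap: "wt P A C z (last qs) = z a' + sum_list (map z ps')" "a' \<in> A" "set ps' \<subseteq> C"
      "ps' \<noteq> []" "last ps' = last qs" "successively (covers P) (a' # ps')"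
      using wt_in unfolding chainvals_def by blast
    have "successively (covers P) ((a' # ps') @ [p])"
      using ap cqp successively_append_iff[of "covers P" "a' # ps'" "[p]"] by (auto simp: last_ConsR)
    hence "wt P A C z (last qs) + z p \<in> chainvals P A C z p"
      unfolding chainvals_def using ap pC by (auto intro!: exI[of _ a'] exI[of _ "ps' @ [p]"])
    hence ne: "chainvals P A C z p \<noteq> {}" and le: "wt P A C z (last qs) \<le> wt P A C z p - z p"
      using wt_ge by force+
    have "g (wt P A C z (last qs)) \<le> g (wt P A C z p - z p)" using le assms(1) by (simp add: monoD)
    then show ?thesis using IH dp ne by simp
  qed
qed

lemma chain_full:
  assumes "mono g" "a \<in> A" "b \<in> A" "set ps \<subseteq> C" "successively (covers P) (a # ps @ [b])"
  shows "sum_list (map (decomp P A C z g) ps) \<le> g (z b) - g (z a)"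
proof (cases "ps = []")
  case True
  then have "z a \<le> z b" using zch[rule_format, of a b "[]"] assms by simp
  then show ?thesis using True assms(1) by (simp add: monoD)
next
  case False
  have sq: "successively (covers P) (a # ps)" and cqp: "covers P (last ps) b"
    using assms(5) False successively_append_iff[of "covers P" "a # ps" "[b]"] by (auto simp: last_ConsR)
  have M: "chainvals P A C z (last ps) \<noteq> {} \<and>
         sum_list (map (decomp P A C z g) ps) \<le> g (wt P A C z (last ps)) - g (z a)"
    using chain_main[OF assms(1,2,4) False sq] .
  then obtain a' ps' where ap: "wt P A C z (last ps) = z a' + sum_list (map z ps')" "a' \<in> A" "set ps' \<subseteq> C"
      "ps' \<noteq> []" "last ps' = last ps" "successively (covers P) (a' # ps')"
      using wt_in unfolding chainvals_def by blast
  have "successively (covers P) (a' # ps' @ [b])"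
    using ap cqp successively_append_iff[of "covers P" "a' # ps'" "[b]"] by (auto simp: last_ConsR)
  hence "sum_list (map z ps') \<le> z b - z a'" using zch ap assms(3) by blast
  hence "g (wt P A C z (last ps)) \<le> g (z b)" using ap assms(1) by (simp add: monoD)
  then show ?thesis using M by simp
qed

end

lemma blocks_len: "length (ideal_blocks Q Is) = Suc (length Is)"
  unfolding ideal_blocks_def Let_def by simp

lemma blocks_nth: "j < Suc (length Is) \<Longrightarrow> ideal_blocks Q Is ! j =
   (Is @ [Q]) ! j - (if j = 0 then {} else (Is @ [Q]) ! (j - 1))"
  unfolding ideal_blocks_def Let_def by (simp del: upt_Suc)

lemma block_exists:
  assumes "a \<in> Q" shows "\<exists>i < Suc (length Is). a \<in> ideal_blocks Q Is ! i"
proof -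
  let ?Js = "Is @ [Q]"
  define i where "i = (LEAST j. a \<in> ?Js ! j)"
  have ex: "a \<in> ?Js ! length Is" using assms by simp
  have i1: "a \<in> ?Js ! i" unfolding i_def by (rule LeastI, rule ex)
  have i2: "i \<le> length Is" unfolding i_def by (rule Least_le, rule ex)
  have i3: "i \<noteq> 0 \<Longrightarrow> a \<notin> ?Js ! (i - 1)"
    using not_less_Least[of "i - 1" "\<lambda>j. a \<in> ?Js ! j"] unfolding i_def[symmetric] by simp
  have "a \<in> ideal_blocks Q Is ! i"
  proof (cases "i = 0")
    case True then show ?thesis using blocks_nth[of i Is Q] i1 i2 by simp
  next
    case False then show ?thesis using blocks_nth[of i Is Q] i1 i2 i3 by simp
  qed
  then show ?thesis using i2 by (intro exI[of _ i]) simp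
qed

lemma blocks_nonempty:
  assumes "Is \<in> ideal_chains Q" "0 < j" "j < Suc (length Is)"
  shows "ideal_blocks Q Is ! j \<noteq> {}"
proof -
  let ?Js = "Is @ [Q]"
  have s1: "successively (\<subset>) Is" using assms(1) unfolding ideal_chains_def by blast
  have s2: "last Is \<subset> Q" if "Is \<noteq> []"
  proof -
    have "last Is \<in> set Is" using that by simp
    then have "last Is \<subseteq> Q" using assms(1) unfolding ideal_chains_def order_ideal_def by blast
    moreover have "last Is \<noteq> Q" using assms(1) that unfolding ideal_chains_def by blast
    ultimately show ?thesis by blast
  qed
  have "successively (\<subset>) ?Js"
    using s1 s2 successively_append_iff[of "(\<subset>)" Is "[Q]"] by auto
  moreover have "Suc (j - 1) < length ?Js" using assms(2,3) by simp
  ultimately have "?Js ! (j - 1) \<subset> ?Js ! Suc (j - 1)" by (rule successively_nth)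
  then have "?Js ! (j - 1) \<subset> ?Js ! j" using assms(2) by simp
  moreover have "ideal_blocks Q Is ! j = ?Js ! j - ?Js ! (j - 1)" using blocks_nth[of j Is Q] assms by simp
  ultimately show ?thesis by blast
qed

lemma block_mono:
  assumes "Is \<in> ideal_chains Q" "f \<in> markings_L Q Is" "i \<le> j" "j < Suc (length Is)"
    "a \<in> ideal_blocks Q Is ! i" "b \<in> ideal_blocks Q Is ! j"
  shows "f a \<le> f b"
proof -
  have eqb: "\<And>B a b. B \<in> set (ideal_blocks Q Is) \<Longrightarrow> a \<in> B \<Longrightarrow> b \<in> B \<Longrightarrow> f a = f b"
    using assms(2) unfolding markings_L_def by blast
  have adj: "\<And>j a b. Suc j < length (ideal_blocks Q Is) \<Longrightarrow> a \<in> ideal_blocks Q Is ! j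
     \<Longrightarrow> b \<in> ideal_blocks Q Is ! Suc j \<Longrightarrow> f a \<le> f b"
    using assms(2) unfolding markings_L_def by blast
  show ?thesis using assms(3-6)
proof (induction j arbitrary: b)
  case 0
  then have "i = 0" by simp
  then have "ideal_blocks Q Is ! 0 \<in> set (ideal_blocks Q Is)" using blocks_len[of Q Is] by simp
  moreover have "a \<in> ideal_blocks Q Is ! 0" "b \<in> ideal_blocks Q Is ! 0" using 0 \<open>i = 0\<close> by simp_all
  ultimately have "f a = f b" by (rule eqb)
  then show ?case by simp
next
  case (Suc j)
  show ?case
  proof (cases "i = Suc j")
    case True
    then have "ideal_blocks Q Is ! i \<in> set (ideal_blocks Q Is)" using blocks_len[of Q Is] Suc by simp
    moreover have "a \<in> ideal_blocks Q Is ! i" "b \<in> ideal_blocks Q Is ! i" using Suc.prems True by simp_all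
    ultimately have "f a = f b" by (rule eqb)
    then show ?thesis by simp
  next
    case False
    then have ij: "i \<le> j" using Suc by simp
    obtain c where c: "c \<in> ideal_blocks Q Is ! j"
    proof (cases "j = 0")
      case True then have "a \<in> ideal_blocks Q Is ! j" using Suc.prems ij by simp
      then show ?thesis by (rule that)
    next
      case False then have "ideal_blocks Q Is ! j \<noteq> {}" using blocks_nonempty[OF assms(1), of j] Suc.prems by simp
      then show ?thesis using that by blast
    qed
    have "f a \<le> f c" using Suc.IH[OF ij _ Suc.prems(3) c] Suc by simp
    also have "f c \<le> f b" using adj[of j c b] Suc.prems c blocks_len[of Q Is] by simp
    finally show ?thesis .
  qed
qed
qed

lemma comono:
  assumes "Is \<in> ideal_chains Q" "lam \<in> markings_L Q Is" "mu \<in> markings_L Q Is" "a \<in> Q" "b \<in> Q"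
  shows "(lam a \<le> lam b \<and> mu a \<le> mu b) \<or> (lam b \<le> lam a \<and> mu b \<le> mu a)"
proof -
  obtain i where i: "i < Suc (length Is)" "a \<in> ideal_blocks Q Is ! i" using block_exists[OF assms(4), of Is] by blast
  obtain j where j: "j < Suc (length Is)" "b \<in> ideal_blocks Q Is ! j" using block_exists[OF assms(5), of Is] by blast
  show ?thesis
  proof (cases "i \<le> j")
    case True
    have "lam a \<le> lam b" using block_mono[OF assms(1) assms(2) True j(1) i(2) j(2)] .
    moreover have "mu a \<le> mu b" using block_mono[OF assms(1) assms(3) True j(1) i(2) j(2)] .
    ultimately show ?thesis by simp
  next
    case False
    then have ji: "j \<le> i" by simp
    have "lam b \<le> lam a" using block_mono[OF assms(1) assms(2) ji i(1) j(2) i(2)] .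
    moreover have "mu b \<le> mu a" using block_mono[OF assms(1) assms(3) ji i(1) j(2) i(2)] .
    ultimately show ?thesis by simp
  qed
qed

definition phiF :: "'a set \<Rightarrow> ('a \<Rightarrow> real) \<Rightarrow> ('a \<Rightarrow> real) \<Rightarrow> real \<Rightarrow> real" where
  "phiF Q l m t = (if Q = {} then 0 else Min ((\<lambda>a. m a + max 0 (t - (l a + m a))) ` Q))"

lemma phiF_mono:
  assumes "finite Q" shows "mono (phiF Q l m)"
proof (rule monoI)
  fix t t' :: real assume tt: "t \<le> t'"
  show "phiF Q l m t \<le> phiF Q l m t'"
  proof (cases "Q = {}")
    case True then show ?thesis by (simp add: phiF_def)
  next
    case False
    let ?S = "\<lambda>t. (\<lambda>a. m a + max 0 (t - (l a + m a))) ` Q"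
    have "Min (?S t') \<in> ?S t'" using assms False by (intro Min_in) auto
    then obtain a where a: "a \<in> Q" "Min (?S t') = m a + max 0 (t' - (l a + m a))" by auto
    have "Min (?S t) \<le> m a + max 0 (t - (l a + m a))" using a assms by (intro Min_le) auto
    also have "\<dots> \<le> m a + max 0 (t' - (l a + m a))" using tt by simp
    finally show ?thesis using a False by (simp add: phiF_def)
  qed
qed

lemma phiF_mono2:
  assumes "finite Q" shows "mono (\<lambda>t. t - phiF Q l m t)"
proof (rule monoI)
  fix t t' :: real assume tt: "t \<le> t'"
  show "t - phiF Q l m t \<le> t' - phiF Q l m t'"
  proof (cases "Q = {}")
    case True then show ?thesis using tt by (simp add: phiF_def)
  next
    case False
    let ?S = "\<lambda>t. (\<lambda>a. m a + max 0 (t - (l a + m a))) ` Q"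
    have "Min (?S t) \<in> ?S t" using assms False by (intro Min_in) auto
    then obtain a where a: "a \<in> Q" "Min (?S t) = m a + max 0 (t - (l a + m a))" by auto
    have "Min (?S t') \<le> m a + max 0 (t' - (l a + m a))" using a assms by (intro Min_le) auto
    also have "\<dots> \<le> m a + max 0 (t - (l a + m a)) + (t' - t)" using tt by simp
    finally show ?thesis using a False by (simp add: phiF_def)
  qed
qed

lemma phiF_val:
  assumes "finite Q" "b \<in> Q"
    and co: "\<forall>a\<in>Q. \<forall>b\<in>Q. (l a \<le> l b \<and> m a \<le> m b) \<or> (l b \<le> l a \<and> m b \<le> m a)"
  shows "phiF Q l m (l b + m b) = m b"
proof -
  let ?S = "(\<lambda>a. m a + max 0 (l b + m b - (l a + m a))) ` Q"
  have "Min ?S = m b"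
  proof (rule antisym)
    show "Min ?S \<le> m b" using assms by (intro Min_le) (auto intro!: image_eqI[of _ _ b])
  next
    show "m b \<le> Min ?S"
    proof (subst Min_ge_iff)
      show "finite ?S" using assms by simp
      show "?S \<noteq> {}" using assms by auto
      show "\<forall>x\<in>?S. m b \<le> x"
      proof
        fix x assume "x \<in> ?S"
        then obtain a where a: "a \<in> Q" "x = m a + max 0 (l b + m b - (l a + m a))" by auto
        from co a(1) assms(2) have "(l a \<le> l b \<and> m a \<le> m b) \<or> (l b \<le> l a \<and> m b \<le> m a)" by blast
        then show "m b \<le> x" using a(2) by auto
      qed
    qed
  qed
  then show ?thesis using assms(2) by (auto simp: phiF_def)
qed

lemma phiF_int:
  assumes "finite Q" "\<forall>a\<in>Q. l a \<in> \<int> \<and> m a \<in> \<int>" "t \<in> \<int>"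
  shows "phiF Q l m t \<in> \<int>"
proof (cases "Q = {}")
  case True then show ?thesis by (simp add: phiF_def)
next
  case False
  let ?S = "(\<lambda>a. m a + max 0 (t - (l a + m a))) ` Q"
  have "Min ?S \<in> ?S" using assms False by (intro Min_in) auto
  then obtain a where a: "a \<in> Q" "Min ?S = m a + max 0 (t - (l a + m a))" by auto
  have "max 0 (t - (l a + m a)) \<in> \<int>" using assms a unfolding max_def by auto
  then show ?thesis using a assms False by (simp add: phiF_def)
qed

lemma sum_list_Ints: "set xs \<subseteq> \<int> \<Longrightarrow> sum_list xs \<in> (\<int> :: real set)"
  by (induction xs) auto

lemma decomp_int:
  assumes "finite P" "\<forall>p\<in>P. z p \<in> \<int>" "\<And>t. t \<in> \<int> \<Longrightarrow> g t \<in> \<int>" "A \<subseteq> P" "C \<subseteq> P" "p \<in> P"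
  shows "decomp P A C z g p \<in> \<int>"
proof -
  have cv: "chainvals P A C z q \<subseteq> \<int>" for q
  proof
    fix v assume "v \<in> chainvals P A C z q"
    then obtain a ps where v: "v = z a + sum_list (map z ps)" "a \<in> A" "set ps \<subseteq> C"
      unfolding chainvals_def by blast
    have "sum_list (map z ps) \<in> \<int>" using v assms by (intro sum_list_Ints) auto
    then show "v \<in> \<int>" using v assms by auto
  qed
  have w: "wt P A C z q \<in> \<int>" for q
  proof (cases "chainvals P A C z q = {}")
    case True then show ?thesis unfolding wt_def by simp
  next
    case False
    then have "Max (chainvals P A C z q) \<in> chainvals P A C z q"
      using finite_chainvals[OF assms(1,4,5), of z q] by (intro Max_in) auto
    then show ?thesis using cv[of q] False unfolding wt_def by auto
  qed
  show ?thesis using assms w unfolding decomp_def by auto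
qed

lemma decomp_add:
  assumes "\<And>t. g t + h t = t" "\<forall>p. p \<notin> A \<union> C \<longrightarrow> z p = 0"
  shows "decomp P A C z g p + decomp P A C z h p = z p"
proof -
  have "g (wt P A C z p) - g (wt P A C z p - z p) + (h (wt P A C z p) - h (wt P A C z p - z p))
     = (g (wt P A C z p) + h (wt P A C z p)) - (g (wt P A C z p - z p) + h (wt P A C z p - z p))"
    by simp
  also have "\<dots> = z p" using assms(1) by simp
  finally show ?thesis using assms unfolding decomp_def by auto
qed

lemma decomp_in:
  fixes P Pstar C Ord :: "'a::order set"
  assumes "finite P" "P = Pstar \<union> C \<union> Ord" "Pstar \<inter> C = {}" "C \<inter> Ord = {}"
    "z \<in> mco_polyhedron P Pstar C Ord s" "mono g" "\<forall>a\<in>Pstar. g (s a) = l a"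
  shows "decomp P (Pstar \<union> Ord) C z g \<in> mco_polyhedron P Pstar C Ord l"
proof -
  let ?A = "Pstar \<union> Ord"
  have AP: "?A \<subseteq> P" and CP: "C \<subseteq> P" and AC: "?A \<inter> C = {}" using assms(2-4) by auto
  have zch: "\<forall>a b ps. a \<in> ?A \<longrightarrow> b \<in> ?A \<longrightarrow> set ps \<subseteq> C \<longrightarrow> successively (covers P) (a # ps @ [b])
               \<longrightarrow> sum_list (map z ps) \<le> z b - z a"
    using assms(5) unfolding mco_polyhedron_def by blast
  have zs: "\<forall>a\<in>Pstar. z a = s a" using assms(5) unfolding mco_polyhedron_def by blast
  let ?d = "decomp P ?A C z g"
  have c1: "\<forall>p. p \<notin> P \<longrightarrow> ?d p = 0" using assms(2) unfolding decomp_def by auto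
  have c2: "\<forall>a\<in>Pstar. ?d a = l a" using zs assms(7) unfolding decomp_def by auto
  have c3: "\<forall>p\<in>C. ?d p \<ge> 0"
  proof
    fix p assume p: "p \<in> C"
    have "z p \<ge> 0" using assms(5) p unfolding mco_polyhedron_def by blast
    then have "g (wt P ?A C z p - z p) \<le> g (wt P ?A C z p)" using assms(6) by (simp add: monoD)
    then show "?d p \<ge> 0" using p AC unfolding decomp_def by auto
  qed
  have c4: "\<forall>a b ps. a \<in> ?A \<longrightarrow> b \<in> ?A \<longrightarrow> set ps \<subseteq> C \<longrightarrow> successively (covers P) (a # ps @ [b])
               \<longrightarrow> sum_list (map ?d ps) \<le> ?d b - ?d a"
  proof (intro allI impI)
    fix a b ps assume h: "a \<in> ?A" "b \<in> ?A" "set ps \<subseteq> C" "successively (covers P) (a # ps @ [b])"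
    have "sum_list (map ?d ps) \<le> g (z b) - g (z a)"
      using chain_full[OF assms(1) AP CP AC zch assms(6) h] .
    then show "sum_list (map ?d ps) \<le> ?d b - ?d a" using h unfolding decomp_def by simp
  qed
  show ?thesis unfolding mco_polyhedron_def using c1 c2 c3 c4 by blast
qed

lemma poly_add:
  assumes "x \<in> mco_polyhedron P Pstar C Ord l" "y \<in> mco_polyhedron P Pstar C Ord m"
  shows "(\<lambda>p. x p + y p) \<in> mco_polyhedron P Pstar C Ord (\<lambda>p. l p + m p)"
proof -
  have "sum_list (map (\<lambda>p. x p + y p) ps) \<le> (x b + y b) - (x a + y a)"
    if "a \<in> Pstar \<union> Ord" "b \<in> Pstar \<union> Ord" "set ps \<subseteq> C" "successively (covers P) (a # ps @ [b])"
    for a b ps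
  proof -
    have "sum_list (map x ps) \<le> x b - x a" "sum_list (map y ps) \<le> y b - y a"
      using assms that unfolding mco_polyhedron_def by blast+
    then show ?thesis by (simp add: sum_list_addf)
  qed
  moreover have "\<forall>p. p \<notin> P \<longrightarrow> x p + y p = 0" using assms unfolding mco_polyhedron_def by simp
  moreover have "\<forall>a\<in>Pstar. x a + y a = l a + m a" using assms unfolding mco_polyhedron_def by simp
  moreover have "\<forall>p\<in>C. x p + y p \<ge> 0" using assms unfolding mco_polyhedron_def by (simp add: add_nonneg_nonneg)
  ultimately show ?thesis unfolding mco_polyhedron_def mem_Collect_eq by blast
qed

theorem theorem2p10:
  fixes P Pstar C Ord :: "'a::order set"
    and Is :: "'a set list"
    and lam mu :: "'a \<Rightarrow> real"
  assumes "finite P"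
    and "P = Pstar \<union> C \<union> Ord"
    and "Pstar \<inter> C = {}" and "Pstar \<inter> Ord = {}" and "C \<inter> Ord = {}"
    and "minimal_elements P \<subseteq> Pstar"
    and "Is \<in> ideal_chains Pstar"
    and "lam \<in> markings_L Pstar Is" and "mu \<in> markings_L Pstar Is"
  shows "mco_polyhedron P Pstar C Ord (\<lambda>p. lam p + mu p)
           = minkowski_sum (mco_polyhedron P Pstar C Ord lam) (mco_polyhedron P Pstar C Ord mu)
       \<and> ((\<forall>a\<in>Pstar. lam a \<in> \<int>) \<and> (\<forall>a\<in>Pstar. mu a \<in> \<int>) \<longrightarrow>
           mco_lattice_points P Pstar C Ord (\<lambda>p. lam p + mu p)
           = minkowski_sum (mco_lattice_points P Pstar C Ord lam) (mco_lattice_points P Pstar C Ord mu))"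
proof -
  let ?A = "Pstar \<union> Ord"
  let ?s = "\<lambda>p. lam p + mu p"
  have finQ: "finite Pstar" using assms(1,2) by (simp add: finite_subset)
  have co: "\<forall>a\<in>Pstar. \<forall>b\<in>Pstar. (lam a \<le> lam b \<and> mu a \<le> mu b) \<or> (lam b \<le> lam a \<and> mu b \<le> mu a)"
    using comono[OF assms(7-9)] by blast
  define phi where "phi = phiF Pstar lam mu"
  define psi where "psi = (\<lambda>t::real. t - phi t)"
  have mphi: "mono phi" unfolding phi_def using phiF_mono[OF finQ] .
  have mpsi: "mono psi" unfolding psi_def phi_def using phiF_mono2[OF finQ] .
  have vphi: "\<forall>a\<in>Pstar. phi (?s a) = mu a" unfolding phi_def using phiF_val[OF finQ _ co] by blast
  have vpsi: "\<forall>a\<in>Pstar. psi (?s a) = lam a" using vphi unfolding psi_def by simp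
  have sumid: "\<And>t. psi t + phi t = t" unfolding psi_def by simp
  have dec: "decomp P ?A C z psi \<in> mco_polyhedron P Pstar C Ord lam
      \<and> decomp P ?A C z phi \<in> mco_polyhedron P Pstar C Ord mu
      \<and> z = (\<lambda>p. decomp P ?A C z psi p + decomp P ?A C z phi p)"
    if z: "z \<in> mco_polyhedron P Pstar C Ord ?s" for z
  proof (intro conjI)
    show "decomp P ?A C z psi \<in> mco_polyhedron P Pstar C Ord lam"
      using decomp_in[OF assms(1,2,3,5) z mpsi vpsi] .
    show "decomp P ?A C z phi \<in> mco_polyhedron P Pstar C Ord mu"
      using decomp_in[OF assms(1,2,3,5) z mphi vphi] .
    have "\<forall>p. p \<notin> ?A \<union> C \<longrightarrow> z p = 0" using z assms(2) unfolding mco_polyhedron_def by auto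
    then have eq: "\<And>p. decomp P ?A C z psi p + decomp P ?A C z phi p = z p"
      by (rule decomp_add[OF sumid])
    show "z = (\<lambda>p. decomp P ?A C z psi p + decomp P ?A C z phi p)"
      by (rule ext) (simp add: eq)
  qed
  have part1: "mco_polyhedron P Pstar C Ord ?s
      = minkowski_sum (mco_polyhedron P Pstar C Ord lam) (mco_polyhedron P Pstar C Ord mu)"
  proof
    show "mco_polyhedron P Pstar C Ord ?s
      \<subseteq> minkowski_sum (mco_polyhedron P Pstar C Ord lam) (mco_polyhedron P Pstar C Ord mu)"
    proof
      fix z assume "z \<in> mco_polyhedron P Pstar C Ord ?s"
      note d = dec[OF this]
      show "z \<in> minkowski_sum (mco_polyhedron P Pstar C Ord lam) (mco_polyhedron P Pstar C Ord mu)"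
        unfolding minkowski_sum_def mem_Collect_eq
        by (rule exI[of _ "decomp P ?A C z psi"], rule exI[of _ "decomp P ?A C z phi"]) (meson d)
    qed
    show "minkowski_sum (mco_polyhedron P Pstar C Ord lam) (mco_polyhedron P Pstar C Ord mu)
      \<subseteq> mco_polyhedron P Pstar C Ord ?s"
    proof
      fix w assume "w \<in> minkowski_sum (mco_polyhedron P Pstar C Ord lam) (mco_polyhedron P Pstar C Ord mu)"
      then obtain x y where "w = (\<lambda>p. x p + y p)" "x \<in> mco_polyhedron P Pstar C Ord lam"
        "y \<in> mco_polyhedron P Pstar C Ord mu" unfolding minkowski_sum_def by blast
      then show "w \<in> mco_polyhedron P Pstar C Ord ?s" using poly_add by simp
    qed
  qed
  have part2: "mco_lattice_points P Pstar C Ord ?s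
      = minkowski_sum (mco_lattice_points P Pstar C Ord lam) (mco_lattice_points P Pstar C Ord mu)"
    if ints: "\<forall>a\<in>Pstar. lam a \<in> \<int>" "\<forall>a\<in>Pstar. mu a \<in> \<int>"
  proof
    have iphi: "phi t \<in> \<int>" if "t \<in> \<int>" for t
      unfolding phi_def using phiF_int[OF finQ _ that] ints by blast
    have ipsi: "psi t \<in> \<int>" if "t \<in> \<int>" for t
      unfolding psi_def using iphi[OF that] that by simp
    have AP: "?A \<subseteq> P" and CP: "C \<subseteq> P" using assms(2) by auto
    show "mco_lattice_points P Pstar C Ord ?s
      \<subseteq> minkowski_sum (mco_lattice_points P Pstar C Ord lam) (mco_lattice_points P Pstar C Ord mu)"
    proof
      fix z assume zl: "z \<in> mco_lattice_points P Pstar C Ord ?s"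
      then have z: "z \<in> mco_polyhedron P Pstar C Ord ?s" and zi: "\<forall>p\<in>P. z p \<in> \<int>"
        unfolding mco_lattice_points_def by auto
      have i1: "\<forall>p\<in>P. decomp P ?A C z psi p \<in> \<int>" by (intro ballI decomp_int[OF assms(1) zi ipsi AP CP])
      have i2: "\<forall>p\<in>P. decomp P ?A C z phi p \<in> \<int>" by (intro ballI decomp_int[OF assms(1) zi iphi AP CP])
      note d = dec[OF z]
      have d1: "decomp P ?A C z psi \<in> mco_polyhedron P Pstar C Ord lam" using d by (rule conjunct1)
      have d2: "decomp P ?A C z phi \<in> mco_polyhedron P Pstar C Ord mu" using d by (rule conjunct1[OF conjunct2])
      have d3: "z = (\<lambda>p. decomp P ?A C z psi p + decomp P ?A C z phi p)" using d by (rule conjunct2[OF conjunct2])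
      show "z \<in> minkowski_sum (mco_lattice_points P Pstar C Ord lam) (mco_lattice_points P Pstar C Ord mu)"
        unfolding minkowski_sum_def mem_Collect_eq mco_lattice_points_def
        by (intro exI[of _ "decomp P ?A C z psi"] exI[of _ "decomp P ?A C z phi"] conjI CollectI d1 d2 d3 i1 i2)
    qed
    show "minkowski_sum (mco_lattice_points P Pstar C Ord lam) (mco_lattice_points P Pstar C Ord mu)
      \<subseteq> mco_lattice_points P Pstar C Ord ?s"
    proof
      fix w assume "w \<in> minkowski_sum (mco_lattice_points P Pstar C Ord lam) (mco_lattice_points P Pstar C Ord mu)"
      then obtain x y where w: "w = (\<lambda>p. x p + y p)" "x \<in> mco_lattice_points P Pstar C Ord lam"
        "y \<in> mco_lattice_points P Pstar C Ord mu" unfolding minkowski_sum_def by blast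
      then have "w \<in> mco_polyhedron P Pstar C Ord ?s" unfolding mco_lattice_points_def
        using poly_add[of x P Pstar C Ord lam y mu] by simp
      moreover have "\<forall>p\<in>P. w p \<in> \<int>" using w unfolding mco_lattice_points_def by (simp add: Ints_add)
      ultimately show "w \<in> mco_lattice_points P Pstar C Ord ?s" unfolding mco_lattice_points_def by simp
    qed
  qed
  show ?thesis using part1 part2 by blast
qed

end
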